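(* Let $\kappa$ be an infinite cardinal. There exist a non-abelian group $G$ with $|G|=2^\kappa$ and a colouring $c:G\to\kappa$ such that for all non-identity elements $x,y\in G$, if $c(x)=c(y)$ then $c(x)\neq c(xy)$. *)

theory Defs
  imports "HOL-Algebra.Group" "HOL-Library.Equipollence"
begin

end

theory Submission
  imports Defs
begin

lemma sw_inv: "(\<lambda>y::'k. if y = a then b else if y = b then a else y)
   ((\<lambda>y. if y = a then b else if y = b then a else y) x) = x"
  by auto

theorem mainTheorem4:
  fixes K :: "'k set"
  assumes "infinite K"
  shows "\<exists>G :: 'k set monoid.
           group G \<and> \<not> comm_group G \<and> carrier G \<approx> Pow K \<and>
           (\<exists>c. c \<in> carrier G \<rightarrow> K \<and>
              (\<forall>x\<in>carrier G. \<forall>y\<in>carrier G.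
                 x \<noteq> \<one>\<^bsub>G\<^esub> \<longrightarrow> y \<noteq> \<one>\<^bsub>G\<^esub> \<longrightarrow>
                 c x = c y \<longrightarrow> c x \<noteq> c (x \<otimes>\<^bsub>G\<^esub> y)))"
proof -
  obtain f :: "nat \<Rightarrow> 'k" where f: "inj f" "range f \<subseteq> K"
    using infinite_countable_subset[OF assms] by blast
  define t where "t = f 0"
  define a where "a = f 1"
  define b where "b = f 2"
  have ab: "a \<noteq> b" "a \<noteq> t" "b \<noteq> t" "a \<in> K" "b \<in> K" "t \<in> K"
    using f unfolding a_def b_def t_def by (auto simp: inj_eq)
  define sw where "sw = (\<lambda>y::'k. if y = a then b else if y = b then a else y)"
  have swsw[simp]: "sw (sw x) = x" for x unfolding sw_def by auto
  have swt[simp]: "sw t = t" unfolding sw_def using ab by auto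
  have swK: "sw x \<in> K \<longleftrightarrow> x \<in> K" for x unfolding sw_def using ab by auto
  have img: "x \<in> sw ` Z \<longleftrightarrow> sw x \<in> Z" for x Z by (metis image_iff swsw)
  define M where "M = (\<lambda>X Y. {x. (x \<in> X) \<noteq> (if t \<in> X then sw x \<in> Y else x \<in> Y)})"
  have Mt: "t \<in> M X Y \<longleftrightarrow> (t \<in> X) \<noteq> (t \<in> Y)" for X Y unfolding M_def by auto
  define G where "G = \<lparr>carrier = Pow K, mult = M, one = ({}::'k set)\<rparr>"
  have grp: "group G"
  proof (rule groupI)
    fix X Y assume "X \<in> carrier G" "Y \<in> carrier G"
    then show "X \<otimes>\<^bsub>G\<^esub> Y \<in> carrier G"
      unfolding G_def M_def using swK by auto
  next
    show "\<one>\<^bsub>G\<^esub> \<in> carrier G" unfolding G_def by auto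
  next
    fix X Y Z assume "X \<in> carrier G" "Y \<in> carrier G" "Z \<in> carrier G"
    show "X \<otimes>\<^bsub>G\<^esub> Y \<otimes>\<^bsub>G\<^esub> Z = X \<otimes>\<^bsub>G\<^esub> (Y \<otimes>\<^bsub>G\<^esub> Z)"
    proof -
      have mem: "x \<in> M U V \<longleftrightarrow> (x \<in> U) \<noteq> (if t \<in> U then sw x \<in> V else x \<in> V)" for x U V
        unfolding M_def by simp
      have "M (M X Y) Z = M X (M Y Z)"
        apply (simp only: set_eq_iff, rule allI)
        apply (cases "t \<in> X"; cases "t \<in> Y")
        apply (simp_all add: mem Mt)
        apply blast+
        done
      then show ?thesis unfolding G_def by simp
    qed
  next
    fix X assume "X \<in> carrier G"
    show "\<one>\<^bsub>G\<^esub> \<otimes>\<^bsub>G\<^esub> X = X" unfolding G_def M_def by auto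
  next
    fix X assume X: "X \<in> carrier G"
    show "\<exists>y\<in>carrier G. y \<otimes>\<^bsub>G\<^esub> X = \<one>\<^bsub>G\<^esub>"
    proof (intro bexI)
      show "(if t \<in> X then sw ` X else X) \<otimes>\<^bsub>G\<^esub> X = \<one>\<^bsub>G\<^esub>"
        using img[of t X] unfolding G_def M_def by (cases "t \<in> X") (simp_all add: img)
      show "(if t \<in> X then sw ` X else X) \<in> carrier G"
        using X swK unfolding G_def by auto
    qed
  qed
  have ncomm: "\<not> comm_group G"
  proof
    assume "comm_group G"
    then have "{t} \<otimes>\<^bsub>G\<^esub> {a} = {a} \<otimes>\<^bsub>G\<^esub> {t}"
      by (rule comm_monoid.m_comm[OF comm_group.axioms(1)]) (auto simp: G_def ab)
    then have "M {t} {a} = M {a} {t}" unfolding G_def by simp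
    moreover have "b \<in> M {t} {a}" unfolding M_def sw_def using ab by auto
    moreover have "b \<notin> M {a} {t}" unfolding M_def sw_def using ab by auto
    ultimately show False by simp
  qed
  define g where "g = (\<lambda>X::'k set. if t \<in> X then t else (SOME x. x \<in> X))"
  have gX: "X \<noteq> {} \<Longrightarrow> g X \<in> X" for X
    unfolding g_def by (auto intro: someI)
  define h where "h = (\<lambda>x. if x \<in> range f then f (Suc (inv_into UNIV f x)) else x)"
  have hK: "x \<in> K \<Longrightarrow> h x \<in> K" for x unfolding h_def using f by auto
  have hinj: "h x = h y \<Longrightarrow> x = y" for x y
    unfolding h_def using f(1) by (auto split: if_splits simp: inj_eq)
  have hz: "h x \<noteq> f 0" for x
    unfolding h_def using f(1) by (auto simp: inj_eq)
  define c where "c = (\<lambda>X. if X = {} then f 0 else h (g X))"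
  have cK: "c \<in> carrier G \<rightarrow> K"
  proof
    fix X assume "X \<in> carrier G"
    then have "X \<subseteq> K" unfolding G_def by auto
    then show "c X \<in> K" unfolding c_def using f gX hK by (auto simp: subset_eq)
  qed
  have cprop: "c X \<noteq> c (M X Y)" if "X \<noteq> {}" "Y \<noteq> {}" "c X = c Y" for X Y
  proof -
    have "h (g X) = h (g Y)" using that unfolding c_def by simp
    then have gg: "g X = g Y" by (rule hinj)
    have gt: "t \<in> Z \<Longrightarrow> g Z = t" for Z by (simp add: g_def)
    have notin: "g X \<notin> M X Y"
    proof (cases "g X = t")
      case True
      then have "t \<in> X" "t \<in> Y" using gg gX that by metis+
      then show ?thesis using True Mt by simp
    next
      case False
      then have "t \<notin> X" "t \<notin> Y" using gg gt by metis+
      moreover have "g X \<in> X" "g X \<in> Y" using gg gX that by metis+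
      ultimately show ?thesis unfolding M_def by auto
    qed
    show ?thesis
    proof (cases "M X Y = {}")
      case True then show ?thesis using hz that unfolding c_def by auto
    next
      case False
      then have "g (M X Y) \<noteq> g X" using gX notin by metis
      have "c (M X Y) = h (g (M X Y))" "c X = h (g X)" using False that unfolding c_def by simp_all
      then show ?thesis using hinj \<open>g (M X Y) \<noteq> g X\<close> by metis
    qed
  qed
  show ?thesis
    apply (rule exI[of _ G])
    using grp ncomm cK cprop
    by (auto simp: G_def eqpoll_refl intro!: exI[of _ c])
qed

end
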